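(* The function $$q_\intercal(x',\tau,\xi')=\int_{\mathbb R}\frac{\theta\!\left(\dfrac{p(x',0,\tau,\xi)}{1+\xi_n^2+|\xi'|^2_{x'}+\tau^2}\right)}{p(x',0,\tau,\xi)}\,d\xi_n,\qquad \xi=(\xi',\xi_n),$$ belongs to the symbol class $\mathsf S^{-1}(\mathbb R_t\times\mathbb R^{n-1}_{x'})$ (Hörmander class $S^{-1}_{1,0}$ in the variables $(t,x')$ with dual variables $(\tau,\xi')$).
   Context: Let $\alpha^{ij}$ ($1\le i,j\le n-1$) be real, symmetric, smooth functions on $\mathbb R^n$ with bounded derivatives of all orders, with $\xi_n^2+\sum\alpha^{ij}(x)\xi_i\xi_j$ uniformly elliptic. Write $|\xi'|^2_x=\sum_{i,j\le n-1}\alpha^{ij}(x)\xi_i\xi_j$, $|\xi'|_{x'}=|\xi'|_{(x',0)}$, and $p(x,\tau,\xi)=-\tau^2+\xi_n^2+|\xi'|^2_x$. Fix $\theta\in\mathscr C^\infty(\mathbb R,[0,1])$ with $\theta(\sigma)=1$ for $\sigma\ge1/5$ and $\theta(\sigma)=0$ for $\sigma\le1/10$ (so the integrand vanishes wherever $p\le0$). *)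

theory Defs
  imports "HOL-Analysis.Analysis"
begin

definition dpartial :: "'a::real_normed_vector \<Rightarrow> ('a \<Rightarrow> real) \<Rightarrow> 'a \<Rightarrow> real" where
  "dpartial v f x = deriv (\<lambda>s. f (x + s *\<^sub>R v)) 0"

fun iter_partial :: "'a::real_normed_vector list \<Rightarrow> ('a \<Rightarrow> real) \<Rightarrow> 'a \<Rightarrow> real" where
  "iter_partial [] f = f"
| "iter_partial (v # vs) f = dpartial v (iter_partial vs f)"

definition smooth_fun :: "('a::euclidean_space \<Rightarrow> real) \<Rightarrow> bool" where
  "smooth_fun f \<longleftrightarrow> (\<forall>vs. set vs \<subseteq> Basis \<longrightarrow> (\<forall>x. iter_partial vs f differentiable (at x)))"

definition bounded_derivs :: "('a::euclidean_space \<Rightarrow> real) \<Rightarrow> bool" where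
  "bounded_derivs f \<longleftrightarrow> (\<forall>vs. set vs \<subseteq> Basis \<longrightarrow> bounded (range (iter_partial vs f)))"

text \<open>Basis vectors of 'a x 'a are (b,0) (z-directions) and (0,b) (zeta-directions).\<close>
definition symbol_class :: "real \<Rightarrow> ('a::euclidean_space \<Rightarrow> 'a \<Rightarrow> real) \<Rightarrow> bool" where
  "symbol_class m a \<longleftrightarrow>
     smooth_fun (\<lambda>w. a (fst w) (snd w)) \<and>
     (\<forall>vs. set vs \<subseteq> (Basis :: ('a \<times> 'a) set) \<longrightarrow>
        (\<exists>C. \<forall>z \<zeta>. \<bar>iter_partial vs (\<lambda>w. a (fst w) (snd w)) (z, \<zeta>)\<bar>
                 \<le> C * (1 + norm \<zeta>) powr (m - real (length (filter (\<lambda>v. fst v = 0) vs)))))"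

text \<open>Points of R^n are written (x', x_n) with x' in R^(n-1) = real^'m.
  metric_sq alpha x xi' = |xi'|^2_x = sum_{i,j} alpha^{ij}(x) xi_i xi_j.\<close>
definition metric_sq :: "('m::finite \<Rightarrow> 'm \<Rightarrow> ((real^'m) \<times> real) \<Rightarrow> real) \<Rightarrow> (real^'m) \<times> real \<Rightarrow> real^'m \<Rightarrow> real" where
  "metric_sq \<alpha> x \<xi>' = (\<Sum>i\<in>UNIV. \<Sum>j\<in>UNIV. \<alpha> i j x * \<xi>' $ i * \<xi>' $ j)"

definition p_bdry :: "('m::finite \<Rightarrow> 'm \<Rightarrow> ((real^'m) \<times> real) \<Rightarrow> real) \<Rightarrow> real^'m \<Rightarrow> real \<Rightarrow> real^'m \<Rightarrow> real \<Rightarrow> real" where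
  "p_bdry \<alpha> x' \<tau> \<xi>' \<xi>n = \<xi>n^2 + metric_sq \<alpha> (x', 0) \<xi>' - \<tau>^2"

definition q_T :: "('m::finite \<Rightarrow> 'm \<Rightarrow> ((real^'m) \<times> real) \<Rightarrow> real) \<Rightarrow> (real \<Rightarrow> real) \<Rightarrow> real^'m \<Rightarrow> real \<Rightarrow> real^'m \<Rightarrow> real" where
  "q_T \<alpha> \<theta> x' \<tau> \<xi>' = (LINT \<xi>n|lborel.
      \<theta> (p_bdry \<alpha> x' \<tau> \<xi>' \<xi>n / (1 + \<xi>n^2 + metric_sq \<alpha> (x', 0) \<xi>' + \<tau>^2)) / p_bdry \<alpha> x' \<tau> \<xi>' \<xi>n)"

end

theory Submission
  imports Defs "HOL-Probability.Sinc_Integral"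
begin

lemma dpartial_has_derivative:
  assumes "(f has_derivative D) (at x)"
  shows "dpartial v f x = D v"
proof -
  have l: "linear D" using assms has_derivative_linear by blast
  have "((\<lambda>s. x + s *\<^sub>R v) has_derivative (\<lambda>s. s *\<^sub>R v)) (at 0)"
    by (auto intro!: derivative_eq_intros)
  moreover have "(f has_derivative D) (at (x + 0 *\<^sub>R v))" using assms by simp
  ultimately have "((\<lambda>s. f (x + s *\<^sub>R v)) has_derivative (\<lambda>s. D (s *\<^sub>R v))) (at 0)"
    using has_derivative_compose[of "\<lambda>s. x + s *\<^sub>R v" _ 0 UNIV f D] by (simp add: o_def)
  moreover have "(\<lambda>s. D (s *\<^sub>R v)) = (*) (D v)"
    using l by (auto simp add: linear_scale)
  ultimately have "((\<lambda>s. f (x + s *\<^sub>R v)) has_real_derivative D v) (at 0)"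
    by (simp add: has_field_derivative_def)
  then show ?thesis unfolding dpartial_def by (rule DERIV_imp_deriv)
qed

lemma has_derivative_partials:
  fixes f :: "'a::euclidean_space \<Rightarrow> real"
  assumes "(f has_derivative D) (at x)"
  shows "(f has_derivative (\<lambda>u. \<Sum>b\<in>Basis. (u \<bullet> b) * dpartial b f x)) (at x)"
proof -
  have l: "linear D" using assms has_derivative_linear by blast
  have "D u = (\<Sum>b\<in>Basis. (u \<bullet> b) * dpartial b f x)" for u
  proof -
    have "D u = D (\<Sum>b\<in>Basis. (u \<bullet> b) *\<^sub>R b)" by (simp add: euclidean_representation)
    also have "\<dots> = (\<Sum>b\<in>Basis. (u \<bullet> b) * D b)"
      using l by (simp add: linear_sum linear_scale)
    finally show ?thesis using dpartial_has_derivative[OF assms] by simp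
  qed
  then have "D = (\<lambda>u. \<Sum>b\<in>Basis. (u \<bullet> b) * dpartial b f x)" by auto
  then show ?thesis using assms by simp
qed

lemma dpartial_const: "dpartial v (\<lambda>x. c) x = 0"
  unfolding dpartial_def by simp

lemma dpartial_zero_dir: "dpartial 0 f x = 0"
  unfolding dpartial_def by simp

declare split_paired_All[simp del] split_paired_Ex[simp del]

lemma dpartial_frechet:
  assumes "f differentiable (at x)"
  shows "dpartial v f x = frechet_derivative f (at x) v"
  using dpartial_has_derivative[OF frechet_derivative_works[THEN iffD1, OF assms]] .

definition rho :: "'z::euclidean_space \<times> 'y::euclidean_space \<Rightarrow> real \<Rightarrow> real" where
  "rho w s = sqrt (1 + s^2 + (norm (snd w))^2)"

definition dz :: "'z::euclidean_space \<times> 'y::euclidean_space \<Rightarrow> real" where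
  "dz v = (if fst v = 0 then 1 else 0)"

definition pd :: "'z::euclidean_space \<times> 'y::euclidean_space \<Rightarrow> ('z \<times> 'y \<Rightarrow> real \<Rightarrow> real) \<Rightarrow> 'z \<times> 'y \<Rightarrow> real \<Rightarrow> real" where
  "pd v f = (\<lambda>w s. dpartial v (\<lambda>w. f w s) w)"

fun TT :: "nat \<Rightarrow> real \<Rightarrow> ('z::euclidean_space \<times> 'y::euclidean_space \<Rightarrow> real \<Rightarrow> real) \<Rightarrow> bool" where
  "TT 0 k f = ((\<forall>w. (\<lambda>s. f w s) \<in> borel_measurable borel) \<and> (\<exists>C. \<forall>w s. \<bar>f w s\<bar> \<le> C * rho w s powr k))"
| "TT (Suc n) k f = (TT 0 k f \<and> (\<forall>w s. (\<lambda>w. f w s) differentiable (at w)) \<and> (\<forall>v\<in>Basis. TT n (k - dz v) (pd v f)))"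

lemma rho_ge1: "rho w s \<ge> 1"
  unfolding rho_def by simp

lemma rho_pos: "rho w s > 0"
  using rho_ge1[of w s] by linarith

lemma rho_nz[simp]: "rho w s \<noteq> 0"
  using rho_pos[of w s] by linarith

lemma rho_sq: "(rho w s)^2 = 1 + s^2 + (norm (snd w))^2"
  unfolding rho_def by (simp add: add_nonneg_nonneg)

lemma TT_Suc_le: "TT (Suc n) k f \<Longrightarrow> TT n k f"
proof (induction n arbitrary: k f)
  case 0 then show ?case by simp
next
  case (Suc n) then show ?case by (simp del: TT.simps(1))
qed

lemma TT_le: "TT n k f \<Longrightarrow> m \<le> n \<Longrightarrow> TT m k f"
  by (induction n) (auto dest: TT_Suc_le simp: le_Suc_eq simp del: TT.simps)

lemma TT0_bound: "TT 0 k f \<Longrightarrow> \<exists>C\<ge>0. \<forall>w s. \<bar>f w s\<bar> \<le> C * rho w s powr k"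
proof -
  assume "TT 0 k f"
  then obtain C where C: "\<forall>w s. \<bar>f w s\<bar> \<le> C * rho w s powr k" by auto
  have "\<bar>f w s\<bar> \<le> max C 0 * rho w s powr k" for w s
  proof -
    have "C * rho w s powr k \<le> max C 0 * rho w s powr k"
      by (intro mult_right_mono) auto
    then show "\<bar>f w s\<bar> \<le> max C 0 * rho w s powr k" using C by (meson order_trans)
  qed
  then show ?thesis by (intro exI[of _ "max C 0"]) auto
qed

lemma TT0_mono: "TT 0 k f \<Longrightarrow> k \<le> k' \<Longrightarrow> TT 0 k' f"
proof -
  assume a: "TT 0 k f" "k \<le> k'"
  then obtain C where C: "C \<ge> 0" "\<forall>w s. \<bar>f w s\<bar> \<le> C * rho w s powr k" using TT0_bound by blast
  have "\<bar>f w s\<bar> \<le> C * rho w s powr k'" for w s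
  proof -
    have "rho w s powr k \<le> rho w s powr k'"
      using rho_ge1[of w s] a(2) by (intro powr_mono) auto
    moreover have "\<bar>f w s\<bar> \<le> C * rho w s powr k" using C(2) by blast
    ultimately show ?thesis using C(1) mult_left_mono[of _ _ C] by (meson order_trans)
  qed
  then show ?thesis using a by (auto simp: split_paired_All)
qed

lemma TT_mono: "TT n k f \<Longrightarrow> k \<le> k' \<Longrightarrow> TT n k' f"
proof (induction n arbitrary: k k' f)
  case 0
  then show ?case using TT0_mono by blast
next
  case (Suc n)
  have "TT 0 k' f" using Suc.prems TT0_mono[of k f k'] by (simp del: TT.simps(1))
  moreover have "TT n (k' - dz v) (pd v f)" if "v \<in> Basis" for v
    using Suc.IH[of "k - dz v" "pd v f" "k' - dz v"] Suc.prems that by (simp del: TT.simps(1))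
  ultimately show ?case using Suc.prems by (simp del: TT.simps(1))
qed

lemma TT_zero: "TT n k (\<lambda>w s. 0)"
proof (induction n arbitrary: k)
  case 0 then show ?case by (auto intro!: exI[of _ 0])
next
  case (Suc n)
  have "pd v (\<lambda>w s. 0) = (\<lambda>w s. 0)" for v :: "'a::euclidean_space \<times> 'b::euclidean_space"
    unfolding pd_def by (simp add: dpartial_const)
  then show ?case using Suc by (simp del: TT.simps(1)) (auto intro!: exI[of _ 0])
qed

lemma TT_const: "TT n 0 (\<lambda>w s. c)"
proof (cases n)
  case 0 then show ?thesis by (auto intro!: exI[of _ "\<bar>c\<bar>"])
next
  case (Suc m)
  have "pd v (\<lambda>w s. c) = (\<lambda>w s. 0)" for v :: "'a::euclidean_space \<times> 'b::euclidean_space"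
    unfolding pd_def by (simp add: dpartial_const)
  then show ?thesis using Suc TT_zero by (auto intro!: exI[of _ "\<bar>c\<bar>"])
qed

lemma pd_add:
  assumes "\<forall>w s. (\<lambda>w. f w s) differentiable (at w)" "\<forall>w s. (\<lambda>w. g w s) differentiable (at w)"
  shows "pd v (\<lambda>w s. f w s + g w s) = (\<lambda>w s. pd v f w s + pd v g w s)"
proof (intro ext)
  fix w :: "'a \<times> 'b" and s :: real
  have f: "((\<lambda>w. f w s) has_derivative frechet_derivative (\<lambda>w. f w s) (at w)) (at w)"
    using assms(1) frechet_derivative_works by blast
  have g: "((\<lambda>w. g w s) has_derivative frechet_derivative (\<lambda>w. g w s) (at w)) (at w)"
    using assms(2) frechet_derivative_works by blast
  have d: "((\<lambda>w. f w s + g w s) has_derivative (\<lambda>h. frechet_derivative (\<lambda>w. f w s) (at w) h + frechet_derivative (\<lambda>w. g w s) (at w) h)) (at w)"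
    by (rule has_derivative_add[OF f g])
  show "pd v (\<lambda>w s. f w s + g w s) w s = pd v f w s + pd v g w s"
    unfolding pd_def by (simp add: dpartial_has_derivative[OF f] dpartial_has_derivative[OF g] dpartial_has_derivative[OF d])
qed

lemma pd_mult:
  assumes "\<forall>w s. (\<lambda>w. f w s) differentiable (at w)" "\<forall>w s. (\<lambda>w. g w s) differentiable (at w)"
  shows "pd v (\<lambda>w s. f w s * g w s) = (\<lambda>w s. pd v f w s * g w s + f w s * pd v g w s)"
proof (intro ext)
  fix w :: "'a \<times> 'b" and s :: real
  have f: "((\<lambda>w. f w s) has_derivative frechet_derivative (\<lambda>w. f w s) (at w)) (at w)"
    using assms(1) frechet_derivative_works by blast
  have g: "((\<lambda>w. g w s) has_derivative frechet_derivative (\<lambda>w. g w s) (at w)) (at w)"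
    using assms(2) frechet_derivative_works by blast
  have d: "((\<lambda>w. f w s * g w s) has_derivative (\<lambda>h. f w s * frechet_derivative (\<lambda>w. g w s) (at w) h + frechet_derivative (\<lambda>w. f w s) (at w) h * g w s)) (at w)"
    by (rule has_derivative_mult[OF f g])
  show "pd v (\<lambda>w s. f w s * g w s) w s = pd v f w s * g w s + f w s * pd v g w s"
    unfolding pd_def by (simp add: dpartial_has_derivative[OF f] dpartial_has_derivative[OF g] dpartial_has_derivative[OF d])
qed

lemma TT0_add: "TT 0 k f \<Longrightarrow> TT 0 k g \<Longrightarrow> TT 0 k (\<lambda>w s. f w s + g w s)"
proof -
  assume a: "TT 0 k f" "TT 0 k g"
  then obtain C1 C2 where C1: "\<forall>w s. \<bar>f w s\<bar> \<le> C1 * rho w s powr k" and C2: "\<forall>w s. \<bar>g w s\<bar> \<le> C2 * rho w s powr k" by auto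
  have "\<bar>f w s + g w s\<bar> \<le> (C1 + C2) * rho w s powr k" for w s
  proof -
    have "\<bar>f w s\<bar> \<le> C1 * rho w s powr k" "\<bar>g w s\<bar> \<le> C2 * rho w s powr k" using C1 C2 by blast+
    then show ?thesis by (simp add: distrib_right)
  qed
  then show ?thesis using a by (auto intro: borel_measurable_add simp: split_paired_All)
qed

lemma TT0_mult: "TT 0 a f \<Longrightarrow> TT 0 b g \<Longrightarrow> TT 0 (a + b) (\<lambda>w s. f w s * g w s)"
proof -
  assume a: "TT 0 a f" "TT 0 b g"
  then obtain C1 C2 where C1: "C1 \<ge> 0" "\<forall>w s. \<bar>f w s\<bar> \<le> C1 * rho w s powr a"
    and C2: "C2 \<ge> 0" "\<forall>w s. \<bar>g w s\<bar> \<le> C2 * rho w s powr b" using TT0_bound by meson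
  have "\<bar>f w s * g w s\<bar> \<le> (C1 * C2) * rho w s powr (a + b)" for w s
  proof -
    have "\<bar>f w s\<bar> \<le> C1 * rho w s powr a" "\<bar>g w s\<bar> \<le> C2 * rho w s powr b" using C1 C2 by blast+
    then have "\<bar>f w s * g w s\<bar> \<le> (C1 * rho w s powr a) * (C2 * rho w s powr b)"
      unfolding abs_mult using C1 C2 by (intro mult_mono) auto
    also have "\<dots> = (C1 * C2) * rho w s powr (a + b)" by (simp add: powr_add)
    finally show ?thesis .
  qed
  then show ?thesis using a by (auto intro: borel_measurable_times simp: split_paired_All)
qed

lemma TT_add: "TT n k f \<Longrightarrow> TT n k g \<Longrightarrow> TT n k (\<lambda>w s. f w s + g w s)"
proof (induction n arbitrary: k f g)
  case 0
  then show ?case using TT0_add by blast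
next
  case (Suc n)
  have df: "\<forall>w s. (\<lambda>w. f w s) differentiable (at w)" and dg: "\<forall>w s. (\<lambda>w. g w s) differentiable (at w)"
    using Suc.prems by (simp_all del: TT.simps(1))
  have "TT 0 k (\<lambda>w s. f w s + g w s)"
    using Suc.prems TT0_add[of k f g] by (simp del: TT.simps(1))
  moreover have "\<forall>w s. (\<lambda>w. f w s + g w s) differentiable (at w)"
    using df dg by (auto intro: differentiable_add)
  moreover have "\<forall>v\<in>Basis. TT n (k - dz v) (pd v (\<lambda>w s. f w s + g w s))"
    using Suc.IH Suc.prems by (simp add: pd_add[OF df dg] del: TT.simps(1))
  ultimately show ?case by (simp del: TT.simps(1))
qed

lemma TT_mult: "TT n a f \<Longrightarrow> TT n b g \<Longrightarrow> TT n (a + b) (\<lambda>w s. f w s * g w s)"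
proof (induction n arbitrary: a b f g)
  case 0
  then show ?case using TT0_mult by blast
next
  case (Suc n)
  have df: "\<forall>w s. (\<lambda>w. f w s) differentiable (at w)" and dg: "\<forall>w s. (\<lambda>w. g w s) differentiable (at w)"
    using Suc.prems by (simp_all del: TT.simps(1))
  have "TT 0 (a + b) (\<lambda>w s. f w s * g w s)"
    using Suc.prems TT0_mult[of a f b g] by (simp del: TT.simps(1))
  moreover have "\<forall>w s. (\<lambda>w. f w s * g w s) differentiable (at w)"
    using df dg by (auto intro: differentiable_mult)
  moreover have "TT n (a + b - dz v) (pd v (\<lambda>w s. f w s * g w s))" if v: "v \<in> Basis" for v
  proof -
    have fn: "TT n a f" and gn: "TT n b g" using Suc.prems TT_Suc_le by blast+
    have pf: "TT n (a - dz v) (pd v f)" and pg: "TT n (b - dz v) (pd v g)"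
      using Suc.prems v by (simp_all del: TT.simps(1))
    have e1: "a - dz v + b = a + b - dz v" and e2: "a + (b - dz v) = a + b - dz v" by simp_all
    have 1: "TT n (a + b - dz v) (\<lambda>w s. pd v f w s * g w s)"
      using Suc.IH[OF pf gn] unfolding e1 .
    have 2: "TT n (a + b - dz v) (\<lambda>w s. f w s * pd v g w s)"
      using Suc.IH[OF fn pg] unfolding e2 .
    show ?thesis using TT_add[OF 1 2] by (simp add: pd_mult[OF df dg])
  qed
  ultimately show ?case by (simp del: TT.simps(1))
qed

lemma TT_sum: "finite I \<Longrightarrow> (\<forall>i\<in>I. TT n k (f i)) \<Longrightarrow> TT n k (\<lambda>w s. \<Sum>i\<in>I. f i w s)"
proof (induction I rule: finite_induct)
  case empty then show ?case using TT_zero by simp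
next
  case (insert x F)
  then show ?case using TT_add[of n k "f x" "\<lambda>w s. \<Sum>i\<in>F. f i w s"] by simp
qed

lemma TT_scale: assumes "TT n k f" shows "TT n k (\<lambda>w s. c * f w s)"
  using TT_mult[OF TT_const[of n c] assms] by simp

lemma TT_diff: "TT n k f \<Longrightarrow> TT n k g \<Longrightarrow> TT n k (\<lambda>w s. f w s - g w s)"
  using TT_add[of n k f "\<lambda>w s. (-1) * g w s"] TT_scale[of n k g "-1"] by simp

lemma rho_powr_m2: "rho w s powr (-2) = inverse ((rho w s)^2)"
  by (simp add: powr_minus less_imp_le[OF rho_pos])

lemma TT_inverse:
  fixes W :: "'a::euclidean_space \<times> 'b::euclidean_space \<Rightarrow> real \<Rightarrow> real"
  assumes c: "c > 0" and lb: "\<forall>w s. W w s \<ge> c * (rho w s)^2"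
  shows "TT n 2 W \<Longrightarrow> TT n (-2) (\<lambda>w s. inverse (W w s))"
proof (induction n)
  case 0
  have pos: "W w s > 0" for w s
    using lb c by (metis mult_pos_pos rho_pos zero_less_power less_le_trans)
  have "\<bar>inverse (W w s)\<bar> \<le> inverse c * rho w s powr (-2)" for w s
  proof -
    have "c * (rho w s)^2 > 0" using c rho_pos by simp
    moreover have "c * (rho w s)^2 \<le> W w s" using lb by blast
    ultimately have "inverse (W w s) \<le> inverse (c * (rho w s)^2)"
      by (rule le_imp_inverse_le[rotated])
    then show ?thesis using pos[of w s] by (simp add: rho_powr_m2 inverse_mult_distrib)
  qed
  then show ?case using 0 by (auto intro: borel_measurable_inverse simp: split_paired_All)
next
  case (Suc n)
  have pos: "W w s \<noteq> 0" for w s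
    using lb c by (metis mult_pos_pos rho_pos zero_less_power less_le_trans less_irrefl)
  have dW: "\<forall>w s. (\<lambda>w. W w s) differentiable (at w)" using Suc.prems by (simp del: TT.simps(1))
  have inv_n: "TT n (-2) (\<lambda>w s. inverse (W w s))" using Suc.IH Suc.prems TT_Suc_le by blast
  have "TT 0 (-2) (\<lambda>w s. inverse (W w s))" using TT_le[OF inv_n] by blast
  moreover have "\<forall>w s. (\<lambda>w. inverse (W w s)) differentiable (at w)"
  proof (intro allI)
    fix w :: "'a \<times> 'b" and s :: real
    obtain D where hD: "((\<lambda>w. W w s) has_derivative D) (at w)" using dW differentiable_def by blast
    show "(\<lambda>w. inverse (W w s)) differentiable (at w)"
      using differentiableI[OF Deriv.has_derivative_inverse[of "\<lambda>w. W w s" w, OF pos[of w s] hD]] .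
  qed
  moreover have "TT n (-2 - dz v) (pd v (\<lambda>w s. inverse (W w s)))" if v: "v \<in> Basis" for v
  proof -
    have e: "pd v (\<lambda>w s. inverse (W w s)) = (\<lambda>w s. (-1) * pd v W w s * (inverse (W w s) * inverse (W w s)))"
    proof (intro ext)
      fix w :: "'a \<times> 'b" and s :: real
      have D: "((\<lambda>w. W w s) has_derivative frechet_derivative (\<lambda>w. W w s) (at w)) (at w)"
        using dW frechet_derivative_works by blast
      have d2: "((\<lambda>w. inverse (W w s)) has_derivative (\<lambda>h. - (inverse (W w s) * frechet_derivative (\<lambda>w. W w s) (at w) h * inverse (W w s)))) (at w)"
        by (rule Deriv.has_derivative_inverse[OF pos[of w s] D])
      show "pd v (\<lambda>w s. inverse (W w s)) w s = (-1) * pd v W w s * (inverse (W w s) * inverse (W w s))"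
        unfolding pd_def by (simp add: dpartial_has_derivative[OF D] dpartial_has_derivative[OF d2])
    qed
    have pW: "TT n (2 - dz v) (pd v W)" using Suc.prems v by (simp del: TT.simps(1))
    have "TT n (2 - dz v + (-2 + -2)) (\<lambda>w s. (-1) * pd v W w s * (inverse (W w s) * inverse (W w s)))"
      using TT_mult[OF TT_scale[OF pW, of "-1"] TT_mult[OF inv_n inv_n]] by simp
    moreover have "2 - dz v + (-2 + -2) = -2 - dz v" by simp
    ultimately show ?thesis using e by simp
  qed
  ultimately show ?case unfolding TT.simps(2) by blast
qed

lemma TT_svar: "TT n 1 (\<lambda>(w::'a::euclidean_space \<times> 'b::euclidean_space) s. s)"
proof -
  have bnd: "\<bar>s\<bar> \<le> 1 * rho w s powr 1" for w :: "'a \<times> 'b" and s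
  proof -
    have "\<bar>s\<bar> = sqrt (s^2)" by simp
    also have "\<dots> \<le> rho w s" unfolding rho_def by (intro real_sqrt_le_mono) simp
    finally show ?thesis using rho_pos[of w s] by simp
  qed
  have T0: "TT 0 1 (\<lambda>(w::'a \<times> 'b) s. s)"
    unfolding TT.simps(1) apply (intro conjI) apply simp apply (rule exI[of _ 1]) using bnd by blast
  have pdl: "pd v (\<lambda>(w::'a \<times> 'b) s. s) = (\<lambda>w s. 0)" for v :: "'a \<times> 'b"
    unfolding pd_def by (simp add: dpartial_const)
  show ?thesis
  proof (cases n)
    case 0 then show ?thesis using T0 by simp
  next
    case (Suc m)
    have "\<forall>w s. (\<lambda>w::'a \<times> 'b. s) differentiable (at w)" by simp
    then show ?thesis using T0 TT_zero unfolding Suc TT.simps(2) pdl by blast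
  qed
qed

lemma Basis_prod_cases:
  assumes "v \<in> (Basis :: ('a::euclidean_space \<times> 'b::euclidean_space) set)"
  shows "fst v = 0 \<or> snd v = 0"
  using assms by (auto simp: Basis_prod_def)

lemma TT_lin: fixes c :: "'b::euclidean_space" shows "TT n 1 (\<lambda>(w::'a::euclidean_space \<times> 'b) s. snd w \<bullet> c)"
proof -
  have bnd: "\<bar>snd w \<bullet> c\<bar> \<le> norm c * rho w s powr 1" for w s
  proof -
    have "\<bar>snd w \<bullet> c\<bar> \<le> norm (snd w) * norm c" by (rule Cauchy_Schwarz_ineq2)
    also have "norm (snd w) = sqrt ((norm (snd w))^2)" by simp
    also have "\<dots> \<le> rho w s" unfolding rho_def by (intro real_sqrt_le_mono) simp
    finally show ?thesis using rho_pos[of w s] by (simp add: mult.commute mult_right_mono)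
  qed
  have T0: "TT 0 1 (\<lambda>w s. snd w \<bullet> c)" using bnd by (auto intro!: exI[of _ "norm c"] simp: split_paired_All)
  have D: "((\<lambda>w. snd w \<bullet> c) has_derivative (\<lambda>h. snd h \<bullet> c)) (at w)" for w :: "'a \<times> 'b"
    by (auto intro!: derivative_eq_intros)
  have pdl: "pd v (\<lambda>w s. snd w \<bullet> c) = (\<lambda>w s. snd v \<bullet> c)" for v :: "'a \<times> 'b"
    unfolding pd_def by (intro ext) (simp add: dpartial_has_derivative[OF D])
  show ?thesis
  proof (cases n)
    case 0 then show ?thesis using T0 by simp
  next
    case (Suc m)
    have "TT m (1 - dz v) (pd v (\<lambda>w s. snd w \<bullet> c))" if v: "v \<in> Basis" for v :: "'a \<times> 'b"
    proof (cases "fst v = 0")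
      case True then show ?thesis using TT_const[of m "snd v \<bullet> c"] by (simp add: pdl dz_def)
    next
      case False
      then have "snd v = 0" using Basis_prod_cases[OF v] by blast
      then show ?thesis using TT_zero by (simp add: pdl)
    qed
    moreover have "\<forall>(w::'a \<times> 'b) s. (\<lambda>w::'a \<times> 'b. snd w \<bullet> c) differentiable (at w)"
      using differentiableI[OF D] by blast
    ultimately show ?thesis using T0 unfolding Suc TT.simps(2) by blast
  qed
qed

definition smbd :: "('x::euclidean_space \<Rightarrow> real) \<Rightarrow> bool" where
  "smbd \<beta> \<longleftrightarrow> (\<forall>vs. set vs \<subseteq> Basis \<longrightarrow> (\<forall>x. iter_partial vs \<beta> differentiable (at x)) \<and> bounded (range (iter_partial vs \<beta>)))"

lemma iter_partial_append: "iter_partial (vs @ ws) f = iter_partial vs (iter_partial ws f)"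
  by (induction vs) auto

lemma smbd_dpartial: "smbd \<beta> \<Longrightarrow> b \<in> Basis \<Longrightarrow> smbd (dpartial b \<beta>)"
  unfolding smbd_def
proof (intro allI impI)
  fix vs :: "'a list"
  assume a: "\<forall>vs. set vs \<subseteq> Basis \<longrightarrow> (\<forall>x. iter_partial vs \<beta> differentiable at x) \<and> bounded (range (iter_partial vs \<beta>))"
    "b \<in> Basis" "set vs \<subseteq> Basis"
  have "iter_partial vs (dpartial b \<beta>) = iter_partial (vs @ [b]) \<beta>"
    by (simp add: iter_partial_append)
  then show "(\<forall>x. iter_partial vs (dpartial b \<beta>) differentiable at x) \<and> bounded (range (iter_partial vs (dpartial b \<beta>)))"
    using a(1)[rule_format, of "vs @ [b]"] a(2,3) by simp
qed

lemma TT_comp_lin: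
  fixes L :: "'a::euclidean_space \<times> 'b::euclidean_space \<Rightarrow> 'x::euclidean_space"
  assumes L: "linear L" and LB: "\<forall>v\<in>Basis. L v = 0 \<or> (fst v \<noteq> 0 \<and> L v \<in> Basis)"
  shows "smbd \<beta> \<Longrightarrow> TT n 0 (\<lambda>w s. \<beta> (L w))"
proof (induction n arbitrary: \<beta>)
  case 0
  have "bounded (range \<beta>)" using 0 unfolding smbd_def by (metis empty_subsetI iter_partial.simps(1) set_empty)
  then obtain B where B: "\<forall>x. \<bar>\<beta> x\<bar> \<le> B" unfolding bounded_real by auto
  then show ?case by (auto intro!: exI[of _ B])
next
  case (Suc n)
  have db: "\<beta> differentiable (at x)" for x
    using Suc.prems unfolding smbd_def by (metis empty_subsetI iter_partial.simps(1) set_empty)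
  have LD: "(L has_derivative L) (at w)" for w using linear_imp_has_derivative[OF L] .
  have D: "((\<lambda>w. \<beta> (L w)) has_derivative (\<lambda>h. frechet_derivative \<beta> (at (L w)) (L h))) (at w)" for w
    using has_derivative_compose[OF LD frechet_derivative_works[THEN iffD1, OF db]] by (simp add: o_def)
  have pdl: "pd v (\<lambda>w s. \<beta> (L w)) = (\<lambda>w s. dpartial (L v) \<beta> (L w))" for v
    unfolding pd_def by (auto simp: dpartial_has_derivative[OF D] dpartial_frechet[OF db])
  have "TT n (0 - dz v) (pd v (\<lambda>w s. \<beta> (L w)))" if v: "v \<in> Basis" for v
  proof (cases "L v = 0")
    case True then show ?thesis using TT_zero by (simp add: pdl dpartial_zero_dir)
  next
    case False
    then have "fst v \<noteq> 0" "L v \<in> Basis" using LB v by auto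
    then show ?thesis using Suc.IH[OF smbd_dpartial[OF Suc.prems]] by (simp add: pdl dz_def)
  qed
  moreover have "TT 0 0 (\<lambda>w s. \<beta> (L w))"
  proof -
    have "bounded (range \<beta>)" using Suc.prems unfolding smbd_def by (metis empty_subsetI iter_partial.simps(1) set_empty)
    then obtain B where B: "\<forall>x. \<bar>\<beta> x\<bar> \<le> B" unfolding bounded_real by auto
    then show ?thesis by (auto intro!: exI[of _ B])
  qed
  moreover have "\<forall>w s. (\<lambda>w. \<beta> (L w)) differentiable (at w)" using differentiableI[OF D] by blast
  ultimately show ?case unfolding TT.simps(2) by blast
qed

fun Sm :: "nat \<Rightarrow> (real \<Rightarrow> real) \<Rightarrow> real set \<Rightarrow> bool" where
  "Sm 0 f S = True"
| "Sm (Suc n) f S = ((\<forall>x\<in>S. f differentiable (at x)) \<and> Sm n (deriv f) S)"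

lemma Sm_Suc_le: "Sm (Suc n) f S \<Longrightarrow> Sm n f S"
  by (induction n arbitrary: f) auto

lemma Sm_subset: "Sm n f S \<Longrightarrow> T \<subseteq> S \<Longrightarrow> Sm n f T"
  by (induction n arbitrary: f) auto

lemma Sm_union: "Sm n f S \<Longrightarrow> Sm n f T \<Longrightarrow> Sm n f (S \<union> T)"
  by (induction n arbitrary: f) auto

lemma deriv_real_has: "f differentiable (at x) \<Longrightarrow> DERIV f x :> deriv f x" for f :: "real \<Rightarrow> real"
  using DERIV_deriv_iff_real_differentiable by blast

lemma Sm_cong: "open S \<Longrightarrow> (\<forall>x\<in>S. f x = g x) \<Longrightarrow> Sm n f S \<Longrightarrow> Sm n g S"
proof (induction n arbitrary: f g)
  case 0 then show ?case by simp
next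
  case (Suc n)
  have "g differentiable (at x)" if x: "x \<in> S" for x
  proof -
    have "f differentiable (at x)" using Suc.prems x by simp
    then obtain D where "(f has_derivative D) (at x)" unfolding differentiable_def by blast
    then have "(g has_derivative D) (at x)"
      using has_derivative_transform_within_open[of f D x UNIV S g] Suc.prems(1,2) x by auto
    then show ?thesis unfolding differentiable_def by blast
  qed
  moreover have "\<forall>x\<in>S. deriv f x = deriv g x"
  proof
    fix x assume x: "x \<in> S"
    have "eventually (\<lambda>y. f y = g y) (nhds x)"
      using Suc.prems(1,2) x by (auto simp: eventually_nhds)
    then show "deriv f x = deriv g x" by (rule deriv_cong_ev) simp
  qed
  then have "Sm n (deriv g) S" using Suc.IH[of "deriv f" "deriv g"] Suc.prems by simp
  ultimately show ?case by simp
qed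

lemma Sm_const: "Sm n (\<lambda>x. c) S"
proof (induction n arbitrary: c)
  case 0 then show ?case by simp
next
  case (Suc n)
  have "deriv (\<lambda>x. c) = (\<lambda>x. 0)" by (intro ext DERIV_imp_deriv) simp
  then show ?case using Suc.IH[of 0] by simp
qed

lemma Sm_add: "open S \<Longrightarrow> Sm n f S \<Longrightarrow> Sm n g S \<Longrightarrow> Sm n (\<lambda>x. f x + g x) S"
proof (induction n arbitrary: f g)
  case 0 then show ?case by simp
next
  case (Suc n)
  have "\<forall>x\<in>S. deriv f x + deriv g x = deriv (\<lambda>x. f x + g x) x"
  proof
    fix x assume "x \<in> S"
    then have "DERIV f x :> deriv f x" "DERIV g x :> deriv g x" using Suc.prems deriv_real_has by auto
    then show "deriv f x + deriv g x = deriv (\<lambda>x. f x + g x) x"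
      by (intro DERIV_imp_deriv[symmetric] derivative_intros)
  qed
  moreover have "Sm n (\<lambda>x. deriv f x + deriv g x) S" using Suc by simp
  ultimately have "Sm n (deriv (\<lambda>x. f x + g x)) S" by (rule Sm_cong[OF Suc.prems(1)])
  then show ?case using Suc.prems by auto
qed

lemma Sm_mult: "open S \<Longrightarrow> Sm n f S \<Longrightarrow> Sm n g S \<Longrightarrow> Sm n (\<lambda>x. f x * g x) S"
proof (induction n arbitrary: f g)
  case 0 then show ?case by simp
next
  case (Suc n)
  have "\<forall>x\<in>S. deriv f x * g x + f x * deriv g x = deriv (\<lambda>x. f x * g x) x"
  proof
    fix x assume "x \<in> S"
    then have "DERIV f x :> deriv f x" "DERIV g x :> deriv g x" using Suc.prems deriv_real_has by auto
    then show "deriv f x * g x + f x * deriv g x = deriv (\<lambda>x. f x * g x) x"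
      by (intro DERIV_imp_deriv[symmetric]) (auto intro!: derivative_eq_intros)
  qed
  moreover have "Sm n (\<lambda>x. deriv f x * g x + f x * deriv g x) S"
  proof -
    have "Sm n f S" "Sm n g S" using Suc.prems Sm_Suc_le by blast+
    then show ?thesis using Suc.IH Suc.prems Sm_add[of S n] by simp
  qed
  ultimately have "Sm n (deriv (\<lambda>x. f x * g x)) S" by (rule Sm_cong[OF Suc.prems(1)])
  then show ?case using Suc.prems by auto
qed

lemma Sm_inverse: "Sm n inverse {0<..}"
proof (induction n)
  case 0 then show ?case by simp
next
  case (Suc n)
  have "\<forall>x\<in>{0::real<..}. (-1) * (inverse x * inverse x) = deriv inverse x"
  proof
    fix x :: real assume "x \<in> {0<..}"
    then show "(-1) * (inverse x * inverse x) = deriv inverse x"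
      by (intro DERIV_imp_deriv[symmetric]) (auto intro!: derivative_eq_intros simp: power2_eq_square)
  qed
  moreover have "Sm n (\<lambda>x. (-1) * (inverse x * inverse x)) {0<..}"
    by (rule Sm_mult[OF open_greaterThan Sm_const Sm_mult[OF open_greaterThan Suc.IH Suc.IH]])
  ultimately have "Sm n (deriv inverse) {0<..}" by (rule Sm_cong[OF open_greaterThan])
  moreover have "\<forall>x\<in>{0::real<..}. inverse differentiable (at x)"
  proof
    fix x :: real assume "x \<in> {0<..}"
    then show "inverse differentiable (at x)" using differentiableI[OF has_derivative_inverse'[of x]] by simp
  qed
  ultimately show ?case by simp
qed

lemma Sm_theta:
  assumes "smooth_fun (\<theta> :: real \<Rightarrow> real)"
  shows "Sm n (iter_partial (replicate k 1) \<theta>) S"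
proof (induction n arbitrary: k)
  case 0 then show ?case by simp
next
  case (Suc n)
  have d: "iter_partial (replicate j 1) \<theta> differentiable (at x)" for j x
  proof -
    have "set (replicate j (1::real)) \<subseteq> Basis" by (induction j) auto
    then show ?thesis using assms unfolding smooth_fun_def by blast
  qed
  have e: "deriv (iter_partial (replicate k 1) \<theta>) = iter_partial (replicate (Suc k) 1) \<theta>"
  proof
    fix x
    have "DERIV (iter_partial (replicate k 1) \<theta>) x :> deriv (iter_partial (replicate k 1) \<theta>) x"
      using deriv_real_has[OF d] .
    then have h: "(iter_partial (replicate k 1) \<theta> has_derivative (*) (deriv (iter_partial (replicate k 1) \<theta>) x)) (at x)"
      by (simp add: has_field_derivative_def)
    show "deriv (iter_partial (replicate k 1) \<theta>) x = iter_partial (replicate (Suc k) 1) \<theta> x"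
      by (simp add: dpartial_has_derivative[OF h])
  qed
  show ?case unfolding Sm.simps e using Suc.IH[of "Suc k"] d by blast
qed

lemma Sm_Phi:
  assumes "smooth_fun (\<theta> :: real \<Rightarrow> real)" and z: "\<forall>\<sigma>. \<sigma> \<le> 1/10 \<longrightarrow> \<theta> \<sigma> = 0"
  shows "Sm n (\<lambda>\<sigma>. \<theta> \<sigma> / \<sigma>) UNIV"
proof -
  have t: "Sm n \<theta> {0<..}" using Sm_theta[OF assms(1), of n 0] by simp
  have "Sm n (\<lambda>\<sigma>. \<theta> \<sigma> * inverse \<sigma>) {0<..}"
    by (rule Sm_mult[OF _ t Sm_inverse]) simp
  then have 1: "Sm n (\<lambda>\<sigma>. \<theta> \<sigma> / \<sigma>) {0<..}" by (simp add: divide_inverse)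
  have "Sm n (\<lambda>\<sigma>. 0) {..<1/10}" by (rule Sm_const)
  then have 2: "Sm n (\<lambda>\<sigma>. \<theta> \<sigma> / \<sigma>) {..<1/10}"
    by (rule Sm_cong[rotated 2]) (auto simp: z)
  have "{0<..} \<union> {..<1/10} = (UNIV :: real set)" by auto
  then show ?thesis using Sm_union[OF 1 2] by simp
qed

lemma TT0_compose:
  assumes "\<forall>x. \<Phi> differentiable (at x)" "TT 0 0 r" "\<forall>w s. \<bar>r w s\<bar> \<le> 1"
  shows "TT 0 0 (\<lambda>w s. \<Phi> (r w s))"
proof -
  have c: "continuous_on UNIV \<Phi>"
    using assms(1) by (intro differentiable_imp_continuous_on) (simp add: differentiable_on_def differentiable_at_withinI)
  have "compact (\<Phi> ` {-1..1})"
    by (rule compact_continuous_image) (auto intro: continuous_on_subset[OF c])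
  then obtain B where B: "\<forall>y\<in>\<Phi> ` {-1..1}. \<bar>y\<bar> \<le> B" using compact_imp_bounded bounded_real by meson
  have "\<bar>\<Phi> (r w s)\<bar> \<le> B * rho w s powr 0" for w s
    using B assms(3) by (auto simp: abs_le_iff)
  moreover have "(\<lambda>s. \<Phi> (r w s)) \<in> borel_measurable borel" for w
  proof -
    have "r w \<in> borel_measurable borel" using assms(2) by simp
    then show ?thesis using measurable_compose[OF _ borel_measurable_continuous_onI[OF c]] by blast
  qed
  ultimately show ?thesis unfolding TT.simps(1) by blast
qed

lemma TT_compose:
  "Sm (Suc n) \<Phi> UNIV \<Longrightarrow> TT n 0 r \<Longrightarrow> \<forall>w s. \<bar>r w s\<bar> \<le> 1 \<Longrightarrow> TT n 0 (\<lambda>w s. \<Phi> (r w s))"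
proof (induction n arbitrary: \<Phi>)
  case 0
  then show ?case using TT0_compose by simp
next
  case (Suc n)
  have dP: "\<forall>x. \<Phi> differentiable (at x)" using Suc.prems by simp
  have dr: "\<forall>w s. (\<lambda>w. r w s) differentiable (at w)" using Suc.prems(2) unfolding TT.simps(2) by blast
  have T0: "TT 0 0 (\<lambda>w s. \<Phi> (r w s))"
    using TT0_compose[OF dP] Suc.prems TT_le by blast
  have chain: "((\<lambda>w. \<Phi> (r w s)) has_derivative (\<lambda>h. deriv \<Phi> (r w s) * frechet_derivative (\<lambda>w. r w s) (at w) h)) (at w)" for w s
  proof -
    have r: "((\<lambda>w. r w s) has_derivative frechet_derivative (\<lambda>w. r w s) (at w)) (at w)"
      using dr frechet_derivative_works by blast
    have p: "(\<Phi> has_derivative (*) (deriv \<Phi> (r w s))) (at (r w s))"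
      using deriv_real_has dP by (simp add: has_field_derivative_def)
    show ?thesis using has_derivative_compose[OF r p] by (simp add: o_def)
  qed
  have pdl: "pd v (\<lambda>w s. \<Phi> (r w s)) = (\<lambda>w s. deriv \<Phi> (r w s) * pd v r w s)" for v
    unfolding pd_def by (intro ext) (simp add: dpartial_has_derivative[OF chain] dpartial_frechet dr)
  have "TT n (0 - dz v) (pd v (\<lambda>w s. \<Phi> (r w s)))" if v: "v \<in> Basis" for v
  proof -
    have rn: "TT n 0 r" using Suc.prems(2) TT_Suc_le by blast
    have sP: "Sm (Suc n) (deriv \<Phi>) UNIV" using Suc.prems(1) by simp
    have a: "TT n 0 (\<lambda>w s. deriv \<Phi> (r w s))"
      using Suc.IH[OF sP rn Suc.prems(3)] .
    have b: "TT n (0 - dz v) (pd v r)" using Suc.prems(2) v unfolding TT.simps(2) by blast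
    show ?thesis using TT_mult[OF a b] by (simp add: pdl)
  qed
  moreover have "\<forall>w s. (\<lambda>w. \<Phi> (r w s)) differentiable (at w)"
    using chain differentiableI by blast
  ultimately show ?case using T0 unfolding TT.simps(2) by blast
qed

lemma onorm_sum_basis:
  fixes c :: "'e::euclidean_space \<Rightarrow> real"
  assumes "\<forall>b\<in>Basis. \<bar>c b\<bar> \<le> M"
  shows "onorm (\<lambda>u::'e. \<Sum>b\<in>Basis. (u \<bullet> b) * c b) \<le> real DIM('e) * M"
proof (rule onorm_le)
  fix u :: 'e
  have "norm (\<Sum>b\<in>Basis. (u \<bullet> b) * c b) \<le> (\<Sum>b\<in>Basis. \<bar>(u \<bullet> b) * c b\<bar>)"
    using norm_sum[of "\<lambda>b. (u \<bullet> b) * c b" Basis] by simp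
  also have "\<dots> \<le> (\<Sum>b\<in>(Basis::'e set). norm u * M)"
  proof (rule sum_mono)
    fix b :: 'e assume b: "b \<in> Basis"
    have "\<bar>u \<bullet> b\<bar> \<le> norm u" using Basis_le_norm[OF b] .
    moreover have "\<bar>c b\<bar> \<le> M" using assms b by blast
    ultimately show "\<bar>(u \<bullet> b) * c b\<bar> \<le> norm u * M"
      unfolding abs_mult by (intro mult_mono) auto
  qed
  also have "\<dots> = real DIM('e) * M * norm u" by simp
  finally show "norm (\<Sum>b\<in>Basis. (u \<bullet> b) * c b) \<le> real DIM('e) * M * norm u" .
qed

lemma mvt1:
  fixes h :: "'e::euclidean_space \<Rightarrow> real"
  assumes d: "\<forall>x. h differentiable (at x)" and M: "\<forall>x. \<forall>b\<in>Basis. \<bar>dpartial b h x\<bar> \<le> M"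
  shows "\<bar>h y - h x\<bar> \<le> (real DIM('e) * M) * norm (y - x)"
proof -
  have D: "(h has_derivative (\<lambda>u. \<Sum>b\<in>Basis. (u \<bullet> b) * dpartial b h z)) (at z within UNIV)" for z
    using has_derivative_partials[OF frechet_derivative_works[THEN iffD1, OF d[rule_format]]] by simp
  have "norm (h y - h x) \<le> (real DIM('e) * M) * norm (y - x)"
    by (rule differentiable_bound[OF convex_UNIV D onorm_sum_basis]) (use M in auto)
  then show ?thesis by simp
qed

lemma taylor2:
  fixes h :: "'e::euclidean_space \<Rightarrow> real"
  assumes d: "\<forall>x. h differentiable (at x)"
    and d2: "\<forall>b\<in>Basis. \<forall>x. dpartial b h differentiable (at x)"
    and M: "\<forall>b\<in>Basis. \<forall>c\<in>Basis. \<forall>x. \<bar>dpartial c (dpartial b h) x\<bar> \<le> M"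
  shows "\<bar>h (w + u) - h w - (\<Sum>b\<in>Basis. (u \<bullet> b) * dpartial b h w)\<bar> \<le> (real DIM('e) * (real DIM('e) * M)) * (norm u)^2"
proof -
  define \<phi> where "\<phi> x = h x - (\<Sum>b\<in>Basis. ((x - w) \<bullet> b) * dpartial b h w)" for x
  define D where "D x = (\<lambda>v. (\<Sum>b\<in>Basis. (v \<bullet> b) * (dpartial b h x - dpartial b h w)))" for x
  have hD: "(h has_derivative (\<lambda>v. \<Sum>b\<in>Basis. (v \<bullet> b) * dpartial b h x)) (at x)" for x
    using has_derivative_partials[OF frechet_derivative_works[THEN iffD1, OF d[rule_format]]] .
  have lD: "((\<lambda>x. \<Sum>b\<in>Basis. ((x - w) \<bullet> b) * dpartial b h w) has_derivative (\<lambda>v. \<Sum>b\<in>Basis. (v \<bullet> b) * dpartial b h w)) (at x)" for x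
    by (auto intro!: derivative_eq_intros)
  have phiD: "(\<phi> has_derivative D x) (at x within cball w (norm u))" for x
  proof -
    have "(\<phi> has_derivative (\<lambda>v. (\<Sum>b\<in>Basis. (v \<bullet> b) * dpartial b h x) - (\<Sum>b\<in>Basis. (v \<bullet> b) * dpartial b h w))) (at x)"
      unfolding \<phi>_def by (rule has_derivative_diff[OF hD lD])
    moreover have "(\<lambda>v. (\<Sum>b\<in>Basis. (v \<bullet> b) * dpartial b h x) - (\<Sum>b\<in>Basis. (v \<bullet> b) * dpartial b h w)) = D x"
      unfolding D_def by (auto simp: sum_subtractf[symmetric] right_diff_distrib)
    ultimately show ?thesis by (auto intro: has_derivative_at_withinI)
  qed
  have Dbound: "onorm (D x) \<le> real DIM('e) * (real DIM('e) * M * norm u)" if x: "x \<in> cball w (norm u)" for x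
    unfolding D_def
  proof (rule onorm_sum_basis, intro ballI)
    fix b :: 'e assume b: "b \<in> Basis"
    have "\<bar>dpartial b h x - dpartial b h w\<bar> \<le> (real DIM('e) * M) * norm (x - w)"
      by (rule mvt1) (use d2 b M in auto)
    also have "\<dots> \<le> (real DIM('e) * M) * norm u"
    proof (rule mult_left_mono)
      show "norm (x - w) \<le> norm u" using x by (simp add: dist_norm norm_minus_commute)
      have "0 \<le> \<bar>dpartial b (dpartial b h) x\<bar>" by simp
      then have "0 \<le> M" using M b by (meson order_trans)
      then show "0 \<le> real DIM('e) * M" by simp
    qed
    finally show "\<bar>dpartial b h x - dpartial b h w\<bar> \<le> real DIM('e) * M * norm u" .
  qed
  have "norm (\<phi> (w + u) - \<phi> w) \<le> (real DIM('e) * (real DIM('e) * M * norm u)) * norm ((w + u) - w)"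
    by (rule differentiable_bound[OF convex_cball phiD Dbound]) (auto simp: dist_norm)
  moreover have "\<phi> (w + u) - \<phi> w = h (w + u) - h w - (\<Sum>b\<in>Basis. (u \<bullet> b) * dpartial b h w)"
    unfolding \<phi>_def by simp
  ultimately show ?thesis by (simp add: power2_eq_square mult_ac)
qed

lemma integrable_G: "integrable lborel (\<lambda>s::real. inverse (1 + s^2))"
proof -
  have "set_integrable lborel (einterval (-\<infinity>) \<infinity>) (\<lambda>x::real. inverse (1 + x^2))"
    by (rule integrable_inverse_1_plus_square)
  moreover have "einterval (-\<infinity>) \<infinity> = (UNIV :: real set)" by (auto simp: einterval_iff)
  ultimately show ?thesis by (simp add: set_integrable_def)
qed

lemma rho_powr_le_G: "k \<le> -2 \<Longrightarrow> rho w s powr k \<le> inverse (1 + s^2)"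
proof -
  assume k: "k \<le> -2"
  have "rho w s powr k \<le> rho w s powr (-2)"
    using rho_ge1[of w s] k by (intro powr_mono) auto
  also have "\<dots> = inverse ((rho w s)^2)" by (rule rho_powr_m2)
  also have "\<dots> \<le> inverse (1 + s^2)"
    using rho_sq[of w s] by (intro le_imp_inverse_le) (auto simp: add_pos_nonneg)
  finally show ?thesis .
qed

lemma TT0_G: "TT 0 k f \<Longrightarrow> k \<le> -2 \<Longrightarrow> \<exists>C\<ge>0. \<forall>w s. \<bar>f w s\<bar> \<le> C * inverse (1 + s^2)"
proof -
  assume a: "TT 0 k f" "k \<le> -2"
  then obtain C where C: "C \<ge> 0" "\<forall>w s. \<bar>f w s\<bar> \<le> C * rho w s powr k" using TT0_bound by blast
  have "\<bar>f w s\<bar> \<le> C * inverse (1 + s^2)" for w s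
    using C(2) mult_left_mono[OF rho_powr_le_G[OF a(2)] C(1), of w s] by (meson order_trans)
  then show ?thesis using C(1) by blast
qed

lemma TT0_integrable: "TT 0 k f \<Longrightarrow> k \<le> -2 \<Longrightarrow> integrable lborel (\<lambda>s. f w s)"
proof -
  assume a: "TT 0 k f" "k \<le> -2"
  obtain C where C: "C \<ge> 0" "\<forall>w s. \<bar>f w s\<bar> \<le> C * inverse (1 + s^2)" using TT0_G[OF a] by blast
  have i: "integrable lborel (\<lambda>s::real. C * inverse (1 + s^2))"
    using integrable_G by simp
  have m: "(\<lambda>s. f w s) \<in> borel_measurable lborel" using a(1) by simp
  have ae: "AE s in lborel. norm (f w s) \<le> norm (C * inverse (1 + s^2))"
    using C by (auto simp: abs_mult)
  show ?thesis using Bochner_Integration.integrable_bound[OF i m ae] .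
qed

lemma dz_nonneg: "dz v \<ge> 0" unfolding dz_def by simp

lemma int_has_derivative:
  fixes g :: "'a::euclidean_space \<times> 'b::euclidean_space \<Rightarrow> real \<Rightarrow> real"
  assumes T: "TT 2 k g" and k: "k \<le> -2"
  shows "((\<lambda>w. LINT s|lborel. g w s) has_derivative (\<lambda>u. \<Sum>b\<in>Basis. (u \<bullet> b) * (LINT s|lborel. pd b g w s))) (at w)"
proof -
  let ?G = "\<lambda>s::real. inverse (1 + s^2)"
  have T0: "TT 0 k g" and dg: "\<forall>w s. (\<lambda>w. g w s) differentiable (at w)"
    and T1: "\<forall>b\<in>Basis. TT 1 (k - dz b) (pd b g)"
    using T by (simp_all add: numeral_2_eq_2 del: TT.simps(1))
  have T1': "TT 0 (k - dz b) (pd b g)" "\<forall>w s. (\<lambda>w. pd b g w s) differentiable (at w)"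
    "\<forall>c\<in>Basis. TT 0 (k - dz b - dz c) (pd c (pd b g))" if b: "b \<in> Basis" for b
    using T1 b by (simp_all del: TT.simps(1))
  have ex: "\<forall>b\<in>Basis. \<forall>c\<in>Basis. \<exists>C\<ge>0. \<forall>w s. \<bar>pd c (pd b g) w s\<bar> \<le> C * ?G s"
  proof (intro ballI)
    fix b c :: "'a \<times> 'b" assume b: "b \<in> Basis" and c: "c \<in> Basis"
    have "k - dz b - dz c \<le> -2" using k dz_nonneg[of b] dz_nonneg[of c] by linarith
    then show "\<exists>C\<ge>0. \<forall>w s. \<bar>pd c (pd b g) w s\<bar> \<le> C * ?G s"
      using TT0_G T1'(3)[OF b] c by blast
  qed
  then obtain CC where CC: "\<forall>b\<in>Basis. \<forall>c\<in>Basis. CC b c \<ge> 0 \<and> (\<forall>w s. \<bar>pd c (pd b g) w s\<bar> \<le> CC b c * ?G s)"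
    by metis
  define M0 where "M0 = (\<Sum>b\<in>(Basis::('a\<times>'b) set). \<Sum>c\<in>Basis. CC b c)"
  have M0: "\<bar>pd c (pd b g) x s\<bar> \<le> M0 * ?G s" if "b \<in> Basis" "c \<in> Basis" for b c x s
  proof -
    have "CC b c \<le> (\<Sum>c\<in>Basis. CC b c)"
      by (rule member_le_sum) (use CC that in auto)
    also have "\<dots> \<le> M0" unfolding M0_def
      by (rule member_le_sum[of b]) (use CC that in \<open>auto intro: sum_nonneg\<close>)
    finally have "CC b c * ?G s \<le> M0 * ?G s" by (intro mult_right_mono) auto
    then show ?thesis using CC that by (meson order_trans)
  qed
  have ig: "integrable lborel (\<lambda>s. g x s)" for x using TT0_integrable[OF T0 k] .
  have ipb: "integrable lborel (\<lambda>s. pd b g x s)" if "b \<in> Basis" for b x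
    using TT0_integrable[OF T1'(1)[OF that]] k dz_nonneg[of b] by simp
  define K where "K = real DIM('a \<times> 'b) * (real DIM('a \<times> 'b) * M0)"
  have tay: "\<bar>g (w + u) s - g w s - (\<Sum>b\<in>Basis. (u \<bullet> b) * pd b g w s)\<bar> \<le> K * ?G s * (norm u)^2" for u s
  proof -
    have e1: "dpartial b (\<lambda>x. g x s) = (\<lambda>x. pd b g x s)" for b unfolding pd_def by simp
    have "\<bar>g (w + u) s - g w s - (\<Sum>b\<in>Basis. (u \<bullet> b) * dpartial b (\<lambda>x. g x s) w)\<bar>
        \<le> (real DIM('a \<times> 'b) * (real DIM('a \<times> 'b) * (M0 * ?G s))) * (norm u)^2"
    proof (rule taylor2)
      show "\<forall>x. (\<lambda>x. g x s) differentiable at x" using dg by blast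
      show "\<forall>b\<in>Basis. \<forall>x. dpartial b (\<lambda>x. g x s) differentiable at x"
        unfolding e1 using T1'(2) by blast
      show "\<forall>b\<in>Basis. \<forall>c\<in>Basis. \<forall>x. \<bar>dpartial c (dpartial b (\<lambda>x. g x s)) x\<bar> \<le> M0 * ?G s"
        unfolding e1 using M0 by (simp add: pd_def)
    qed
    then show ?thesis unfolding e1 K_def by (simp add: mult_ac)
  qed
  have K0: "K \<ge> 0"
  proof -
    have "0 \<le> \<bar>pd c (pd c g) w 0\<bar>" for c by simp
    have "M0 \<ge> 0" unfolding M0_def using CC by (auto intro!: sum_nonneg)
    then show ?thesis unfolding K_def by simp
  qed
  define IG where "IG = (LINT s|lborel. ?G s)"
  have IG0: "IG \<ge> 0" unfolding IG_def by (rule integral_nonneg_AE) auto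
  have rem: "\<bar>(LINT s|lborel. g (w + u) s) - (LINT s|lborel. g w s) - (\<Sum>b\<in>Basis. (u \<bullet> b) * (LINT s|lborel. pd b g w s))\<bar>
      \<le> K * IG * (norm u)^2" for u
  proof -
    have iR: "integrable lborel (\<lambda>s. g (w + u) s - g w s - (\<Sum>b\<in>Basis. (u \<bullet> b) * pd b g w s))"
      using ig ipb by (auto intro!: Bochner_Integration.integrable_diff Bochner_Integration.integrable_sum integrable_mult_right)
    have eq: "(LINT s|lborel. g (w + u) s - g w s - (\<Sum>b\<in>Basis. (u \<bullet> b) * pd b g w s))
        = (LINT s|lborel. g (w + u) s) - (LINT s|lborel. g w s) - (\<Sum>b\<in>Basis. (u \<bullet> b) * (LINT s|lborel. pd b g w s))"
    proof -
      have a: "(LINT s|lborel. (\<Sum>b\<in>Basis. (u \<bullet> b) * pd b g w s)) = (\<Sum>b\<in>Basis. (u \<bullet> b) * (LINT s|lborel. pd b g w s))"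
      proof -
        have "(LINT s|lborel. (\<Sum>b\<in>Basis. (u \<bullet> b) * pd b g w s)) = (\<Sum>b\<in>Basis. (LINT s|lborel. (u \<bullet> b) * pd b g w s))"
          by (rule Bochner_Integration.integral_sum) (use ipb in simp)
        then show ?thesis by simp
      qed
      have b: "integrable lborel (\<lambda>s. \<Sum>b\<in>Basis. (u \<bullet> b) * pd b g w s)"
        using ipb by (auto intro!: Bochner_Integration.integrable_sum integrable_mult_right)
      show ?thesis
        using ig[of "w + u"] ig[of w] b a
        by (simp add: Bochner_Integration.integral_diff Bochner_Integration.integrable_diff)
    qed
    have iB: "integrable lborel (\<lambda>s. K * (norm u)^2 * ?G s)" using integrable_G by simp
    have "norm (LINT s|lborel. g (w + u) s - g w s - (\<Sum>b\<in>Basis. (u \<bullet> b) * pd b g w s))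
        \<le> (LINT s|lborel. K * (norm u)^2 * ?G s)"
      by (rule Bochner_Integration.integral_norm_bound_integral[OF iR iB]) (use tay in \<open>simp add: mult_ac\<close>)
    also have "\<dots> = K * IG * (norm u)^2" unfolding IG_def by (simp add: mult_ac)
    finally show ?thesis using eq by simp
  qed
  show ?thesis
    unfolding has_derivative_at_alt
  proof (intro conjI allI impI)
    show "bounded_linear (\<lambda>u. \<Sum>b\<in>Basis. (u \<bullet> b) * (LINT s|lborel. pd b g w s))"
      by (intro bounded_linear_sum bounded_linear_mult_const bounded_linear_inner_left)
    fix e :: real assume e: "e > 0"
    define d where "d = e / (K * IG + 1)"
    have KI: "K * IG \<ge> 0" using K0 IG0 by simp
    have d: "d > 0" unfolding d_def using e KI by simp
    show "\<exists>d>0. \<forall>y. norm (y - w) < d \<longrightarrow> norm ((LINT s|lborel. g y s) - (LINT s|lborel. g w s) - (\<Sum>b\<in>Basis. ((y - w) \<bullet> b) * (LINT s|lborel. pd b g w s))) \<le> e * norm (y - w)"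
    proof (intro exI[of _ d] conjI allI impI d)
      fix y assume y: "norm (y - w) < d"
      have "K * IG * (norm (y - w))^2 = (K * IG * norm (y - w)) * norm (y - w)" by (simp add: power2_eq_square)
      also have "\<dots> \<le> e * norm (y - w)"
      proof (rule mult_right_mono)
        have "K * IG * norm (y - w) \<le> K * IG * d" using y KI by (intro mult_left_mono) auto
        also have "\<dots> = e * (K * IG / (K * IG + 1))" unfolding d_def by simp
        also have "\<dots> \<le> e * 1" using e KI by (intro mult_left_mono) auto
        finally show "K * IG * norm (y - w) \<le> e" by simp
      qed simp
      finally show "norm ((LINT s|lborel. g y s) - (LINT s|lborel. g w s) - (\<Sum>b\<in>Basis. ((y - w) \<bullet> b) * (LINT s|lborel. pd b g w s))) \<le> e * norm (y - w)"
        using rem[of "y - w"] by simp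
    qed
  qed
qed

lemma einterval_UNIV: "einterval (-\<infinity>) \<infinity> = (UNIV :: real set)"
  by (auto simp: einterval_iff)

lemma int_inv_1: "(LINT x|lborel. inverse (1 + x^2)) = (pi::real)"
  using LBINT_inverse_1_plus_square
  by (simp add: interval_lebesgue_integral_def set_lebesgue_integral_def einterval_UNIV)

lemma int_inv_A:
  fixes A :: real assumes A: "A > 0"
  shows "integrable lborel (\<lambda>s. inverse (A + s^2))" "(LINT s|lborel. inverse (A + s^2)) = pi / sqrt A"
proof -
  define c where "c = sqrt A"
  have c: "c > 0" "c^2 = A" using A unfolding c_def by auto
  have e: "(\<lambda>x. inverse (A + (c * x)^2)) = (\<lambda>x. inverse A * inverse (1 + x^2))"
  proof
    fix x
    have "A + (c * x)^2 = A * (1 + x^2)" using c by (simp add: power_mult_distrib algebra_simps)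
    then show "inverse (A + (c * x)^2) = inverse A * inverse (1 + x^2)"
      by (simp add: inverse_mult_distrib)
  qed
  have "integrable lborel (\<lambda>x. inverse A * inverse (1 + x^2))" using integrable_G by simp
  then show "integrable lborel (\<lambda>s. inverse (A + s^2))"
    using lborel_integrable_real_affine_iff[of c "\<lambda>s. inverse (A + s^2)" 0] c e by simp
  have "(LINT s|lborel. inverse (A + s^2)) = \<bar>c\<bar> *\<^sub>R (LINT x|lborel. inverse (A + (0 + c * x)^2))"
    by (rule lborel_integral_real_affine) (use c in simp)
  also have "\<dots> = c * (inverse A * pi)" using c by (simp add: e int_inv_1)
  also have "\<dots> = pi / sqrt A" using c unfolding c_def by (simp add: field_simps)
  finally show "(LINT s|lborel. inverse (A + s^2)) = pi / sqrt A" .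
qed

lemma rho_meas: "(\<lambda>s. rho w s powr k) \<in> borel_measurable borel"
  unfolding rho_def by measurable

lemma int_rho_bound:
  assumes j: "j \<ge> 0"
  shows "integrable lborel (\<lambda>s. rho w s powr (-2 - j))"
    "(LINT s|lborel. rho w s powr (-2 - j)) \<le> pi * sqrt 2 powr (1 + j) * (1 + norm (snd w)) powr (-1 - j)"
proof -
  define A where "A = 1 + (norm (snd w))^2"
  have A: "A \<ge> 1" unfolding A_def by simp
  have sA: "sqrt A > 0" using A by simp
  have pt: "rho w s powr (-2 - j) \<le> sqrt A powr (-j) * inverse (A + s^2)" for s
  proof -
    have r2: "(rho w s)^2 = A + s^2" unfolding A_def using rho_sq[of w s] by simp
    have e2: "-2 - j = -2 + (-j)" by simp
    have "rho w s powr (-2 - j) = rho w s powr (-2) * rho w s powr (-j)"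
      unfolding e2 by (rule powr_add)
    also have "rho w s powr (-2) = inverse (A + s^2)" using rho_powr_m2[of w s] r2 by simp
    also have "rho w s powr (-j) \<le> sqrt A powr (-j)"
    proof (rule powr_mono2')
      show "- j \<le> 0" using j by simp
      show "0 < sqrt A" by (rule sA)
      have "sqrt A \<le> sqrt ((rho w s)^2)" using r2 by simp
      then show "sqrt A \<le> rho w s" using rho_pos[of w s] by simp
    qed
    then have "inverse (A + s^2) * rho w s powr (-j) \<le> inverse (A + s^2) * sqrt A powr (-j)"
      using A by (intro mult_left_mono) (auto simp: add_pos_nonneg)
    finally show ?thesis by (simp add: mult.commute)
  qed
  have iB: "integrable lborel (\<lambda>s. sqrt A powr (-j) * inverse (A + s^2))"
    using int_inv_A(1)[of A] A by simp
  have ae: "AE s in lborel. norm (rho w s powr (-2 - j)) \<le> norm (sqrt A powr (-j) * inverse (A + s^2))"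
    using pt by (auto intro: order_trans[OF _ abs_ge_self])
  show ir: "integrable lborel (\<lambda>s. rho w s powr (-2 - j))"
    by (rule Bochner_Integration.integrable_bound[OF iB _ ae]) (simp add: rho_meas)
  have "(LINT s|lborel. rho w s powr (-2 - j)) \<le> (LINT s|lborel. sqrt A powr (-j) * inverse (A + s^2))"
    by (rule integral_mono[OF ir iB]) (use pt in simp)
  also have "\<dots> = sqrt A powr (-j) * (pi / sqrt A)" using int_inv_A(2)[of A] A by simp
  also have "\<dots> = pi * sqrt A powr (-1 - j)"
  proof -
    have e1: "-1 - j = -j + (-1)" by simp
    have "sqrt A powr (-1 - j) = sqrt A powr (-j) * sqrt A powr (-1)" unfolding e1 by (rule powr_add)
    moreover have "sqrt A powr (-1) = inverse (sqrt A)" using sA by (simp add: powr_minus)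
    ultimately show ?thesis by (simp add: divide_inverse mult_ac)
  qed
  also have "\<dots> \<le> pi * sqrt 2 powr (1 + j) * (1 + norm (snd w)) powr (-1 - j)"
  proof -
    define t where "t = norm (snd w)"
    have t: "t \<ge> 0" unfolding t_def by simp
    have le: "(1 + t) / sqrt 2 \<le> sqrt A"
    proof -
      have "(1 + t)^2 \<le> 2 * A" unfolding A_def t_def[symmetric]
        using power2_eq_square[of "1 - t"] zero_le_power2[of "1 - t"] by (simp add: power2_eq_square algebra_simps)
      then have "sqrt ((1 + t)^2) \<le> sqrt (2 * A)" by (rule real_sqrt_le_mono)
      then have "1 + t \<le> sqrt 2 * sqrt A" using t by (simp add: real_sqrt_mult del: real_sqrt_le_iff)
      then show ?thesis by (simp add: divide_le_eq mult.commute)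
    qed
    have "sqrt A powr (-1 - j) \<le> ((1 + t) / sqrt 2) powr (-1 - j)"
      by (rule powr_mono2'[OF _ _ le]) (use j t in auto)
    also have "\<dots> = (1 + t) powr (-1 - j) * sqrt 2 powr (1 + j)"
    proof -
      have h: "sqrt 2 powr (-1 - j) = inverse (sqrt 2 powr (1 + j))"
        using powr_minus[of "sqrt 2" "1 + j"] by simp
      have "((1 + t) / sqrt 2) powr (-1 - j) = (1 + t) powr (-1 - j) / sqrt 2 powr (-1 - j)" by (rule powr_divide)
      also have "\<dots> = (1 + t) powr (-1 - j) * sqrt 2 powr (1 + j)" unfolding h by (simp add: divide_inverse)
      finally show ?thesis .
    qed
    finally have "sqrt A powr (-1 - j) \<le> (1 + t) powr (-1 - j) * sqrt 2 powr (1 + j)" .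
    then show ?thesis unfolding t_def using pi_gt_zero
      by (simp add: mult_ac mult_left_mono)
  qed
  finally show "(LINT s|lborel. rho w s powr (-2 - j)) \<le> pi * sqrt 2 powr (1 + j) * (1 + norm (snd w)) powr (-1 - j)" .
qed

fun ipd :: "('a::euclidean_space \<times> 'b::euclidean_space) list \<Rightarrow> ('a \<times> 'b \<Rightarrow> real \<Rightarrow> real) \<Rightarrow> 'a \<times> 'b \<Rightarrow> real \<Rightarrow> real" where
  "ipd [] f = f"
| "ipd (v # vs) f = pd v (ipd vs f)"

definition cnt :: "('a::euclidean_space \<times> 'b::euclidean_space) list \<Rightarrow> real" where
  "cnt vs = real (length (filter (\<lambda>v. fst v = 0) vs))"

lemma cnt_Cons: "cnt (v # vs) = cnt vs + dz v"
  unfolding cnt_def dz_def by simp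

lemma cnt_nonneg: "cnt vs \<ge> 0" unfolding cnt_def by simp

lemma TT_ipd: "set vs \<subseteq> Basis \<Longrightarrow> TT (n + length vs) k f \<Longrightarrow> TT n (k - cnt vs) (ipd vs f)"
proof (induction vs arbitrary: n)
  case Nil then show ?case by (simp add: cnt_def)
next
  case (Cons v vs)
  have "TT (Suc n + length vs) k f" using Cons.prems(2) by (simp add: algebra_simps)
  then have "TT (Suc n) (k - cnt vs) (ipd vs f)" using Cons.IH[of "Suc n"] Cons.prems(1) by simp
  then have 1: "TT n (k - cnt vs - dz v) (pd v (ipd vs f))" using Cons.prems(1) unfolding TT.simps(2) by simp
  have e: "k - cnt (v # vs) = k - cnt vs - dz v" by (simp add: cnt_Cons)
  show ?case unfolding ipd.simps e using 1 .
qed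

lemma sum_basis_delta:
  fixes v :: "'e::euclidean_space"
  assumes "v \<in> Basis"
  shows "(\<Sum>b\<in>Basis. (v \<bullet> b) * F b) = F v"
proof -
  have "(\<Sum>b\<in>Basis. (v \<bullet> b) * F b) = (\<Sum>b\<in>Basis. (if b = v then F b else 0))"
    by (rule sum.cong) (use assms in \<open>auto simp: inner_Basis\<close>)
  also have "\<dots> = F v" using assms by (simp add: sum.delta')
  finally show ?thesis .
qed

lemma TT_symbol:
  fixes f :: "'a::euclidean_space \<times> 'a \<Rightarrow> real \<Rightarrow> real"
  assumes A: "\<forall>n. TT n (-2) f"
  shows "symbol_class (-1) (\<lambda>z \<zeta>. LINT s|lborel. f (z, \<zeta>) s)"
proof -
  let ?Q = "\<lambda>w. LINT s|lborel. f w s"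
  have fe: "(\<lambda>w. (\<lambda>z \<zeta>. LINT s|lborel. f (z, \<zeta>) s) (fst w) (snd w)) = ?Q" by simp
  have Tv: "TT n (-2 - cnt vs) (ipd vs f)" if "set vs \<subseteq> Basis" for n vs
    using TT_ipd[OF that] A by blast
  have k: "-2 - cnt vs \<le> -2" for vs :: "('a \<times> 'a) list" using cnt_nonneg[of vs] by simp
  have HD: "(Q' has_derivative (\<lambda>u. \<Sum>b\<in>Basis. (u \<bullet> b) * (LINT s|lborel. pd b (ipd vs f) w s))) (at w)"
    if "set vs \<subseteq> Basis" "Q' = (\<lambda>w. LINT s|lborel. ipd vs f w s)" for vs w Q'
    using int_has_derivative[OF Tv[OF that(1)] k] that(2) by simp
  have ip: "set vs \<subseteq> Basis \<Longrightarrow> iter_partial vs ?Q = (\<lambda>w. LINT s|lborel. ipd vs f w s)" for vs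
  proof (induction vs)
    case Nil then show ?case by simp
  next
    case (Cons v vs)
    have v: "v \<in> Basis" and vs: "set vs \<subseteq> Basis" using Cons.prems by auto
    show ?case
    proof
      fix w
      have "iter_partial (v # vs) ?Q w = dpartial v (\<lambda>w. LINT s|lborel. ipd vs f w s) w"
        using Cons.IH[OF vs] by simp
      also have "\<dots> = (\<Sum>b\<in>Basis. (v \<bullet> b) * (LINT s|lborel. pd b (ipd vs f) w s))"
        by (rule dpartial_has_derivative[OF HD[OF vs refl]])
      also have "\<dots> = (LINT s|lborel. pd v (ipd vs f) w s)"
        by (rule sum_basis_delta[OF v])
      finally show "iter_partial (v # vs) ?Q w = (LINT s|lborel. ipd (v # vs) f w s)" by simp
    qed
  qed
  have smooth: "smooth_fun ?Q"
    unfolding smooth_fun_def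
  proof (intro allI impI)
    fix vs :: "('a \<times> 'a) list" and x assume vs: "set vs \<subseteq> Basis"
    show "iter_partial vs ?Q differentiable at x"
      using differentiableI[OF HD[OF vs ip[OF vs]]] .
  qed
  have bnd: "\<exists>C. \<forall>z \<zeta>. \<bar>iter_partial vs ?Q (z, \<zeta>)\<bar> \<le> C * (1 + norm \<zeta>) powr (-1 - real (length (filter (\<lambda>v. fst v = 0) vs)))"
    if vs: "set vs \<subseteq> Basis" for vs
  proof -
    define j where "j = cnt vs"
    have j: "j \<ge> 0" unfolding j_def by (rule cnt_nonneg)
    have T0: "TT 0 (-2 - j) (ipd vs f)" unfolding j_def using Tv[OF vs] .
    obtain C where C: "C \<ge> 0" "\<forall>w s. \<bar>ipd vs f w s\<bar> \<le> C * rho w s powr (-2 - j)"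
      using TT0_bound[OF T0] by blast
    have "\<bar>iter_partial vs ?Q w\<bar> \<le> (C * (pi * sqrt 2 powr (1 + j))) * (1 + norm (snd w)) powr (-1 - j)" for w
    proof -
      have i1: "integrable lborel (\<lambda>s. ipd vs f w s)"
        by (rule TT0_integrable[OF T0]) (use j in simp)
      have i2: "integrable lborel (\<lambda>s. C * rho w s powr (-2 - j))"
        using int_rho_bound(1)[OF j, of w] by simp
      have "norm (LINT s|lborel. ipd vs f w s) \<le> (LINT s|lborel. C * rho w s powr (-2 - j))"
        by (rule Bochner_Integration.integral_norm_bound_integral[OF i1 i2]) (use C in simp)
      also have "\<dots> = C * (LINT s|lborel. rho w s powr (-2 - j))" by simp
      also have "\<dots> \<le> C * (pi * sqrt 2 powr (1 + j) * (1 + norm (snd w)) powr (-1 - j))"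
        by (rule mult_left_mono[OF int_rho_bound(2)[OF j] C(1)])
      finally show ?thesis using ip[OF vs] by (simp add: mult_ac)
    qed
    then show ?thesis unfolding j_def cnt_def by (intro exI[of _ "C * (pi * sqrt 2 powr (1 + cnt vs))"]) (auto simp: cnt_def)
  qed
  show ?thesis
    unfolding symbol_class_def fe using smooth bnd by auto
qed

lemma smbd_of: "smooth_fun \<beta> \<Longrightarrow> bounded_derivs \<beta> \<Longrightarrow> smbd \<beta>"
  unfolding smbd_def smooth_fun_def bounded_derivs_def by blast

lemma inner_axis_pair: "snd w \<bullet> (0::real, axis i (1::real)) = snd (snd w) $ i"
  by (cases w) (auto simp: inner_Pair inner_axis)

lemma inner_tau: "snd w \<bullet> (1::real, 0::real^'m) = fst (snd w)"
  by (cases w) (auto simp: inner_Pair)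

theorem main_aux:
  fixes \<alpha> :: "'m::finite \<Rightarrow> 'm \<Rightarrow> ((real^'m) \<times> real) \<Rightarrow> real"
    and \<theta> :: "real \<Rightarrow> real"
  assumes smooth: "\<forall>i j. smooth_fun (\<alpha> i j)"
    and bdd: "\<forall>i j. bounded_derivs (\<alpha> i j)"
    and ell: "\<exists>c>0. \<forall>x \<xi>' \<xi>n. \<xi>n^2 + metric_sq \<alpha> x \<xi>' \<ge> c * (\<xi>n^2 + (norm \<xi>')^2)"
    and \<theta>_smooth: "smooth_fun \<theta>"
    and \<theta>_zero: "\<forall>\<sigma>. \<sigma> \<le> 1/10 \<longrightarrow> \<theta> \<sigma> = 0"
  shows "symbol_class (-1)
           (\<lambda>(z :: real \<times> (real^'m)) (\<zeta> :: real \<times> (real^'m)). q_T \<alpha> \<theta> (snd z) (fst \<zeta>) (snd \<zeta>))"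
proof -
  obtain c where c: "c > 0" and ellc: "\<forall>x \<xi>' \<xi>n. \<xi>n^2 + metric_sq \<alpha> x \<xi>' \<ge> c * (\<xi>n^2 + (norm \<xi>')^2)"
    using ell by blast
  define L :: "(real \<times> (real^'m)) \<times> (real \<times> (real^'m)) \<Rightarrow> (real^'m) \<times> real" where "L w = (snd (fst w), 0)" for w
  have linL: "linear L" unfolding L_def by (auto intro!: linearI simp: algebra_simps)
  have LB: "\<forall>v\<in>Basis. L v = 0 \<or> (fst v \<noteq> 0 \<and> L v \<in> Basis)"
    unfolding L_def by (auto simp: Basis_prod_def zero_prod_def)
  define g :: "(real \<times> (real^'m)) \<times> (real \<times> (real^'m)) \<Rightarrow> real \<Rightarrow> real" where
    "g w s = (\<Sum>i\<in>UNIV. \<Sum>j\<in>UNIV. \<alpha> i j (L w) * (snd w \<bullet> (0, axis i 1)) * (snd w \<bullet> (0, axis j 1)))" for w s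
  have g_eq: "g w s = metric_sq \<alpha> (snd (fst w), 0) (snd (snd w))" for w s
    unfolding g_def metric_sq_def L_def inner_axis_pair ..
  have Tg: "TT n 2 g" for n
  proof -
    have "TT n 2 (\<lambda>w s. \<alpha> i j (L w) * (snd w \<bullet> (0, axis i 1)) * (snd w \<bullet> (0, axis j 1)))" for i j
    proof -
      have a: "TT n 0 (\<lambda>w s. \<alpha> i j (L w))"
        by (rule TT_comp_lin[OF linL LB smbd_of]) (use smooth bdd in auto)
      have "TT n (0 + 1 + 1) (\<lambda>w s. \<alpha> i j (L w) * (snd w \<bullet> (0, axis i 1)) * (snd w \<bullet> (0, axis j 1)))"
        by (rule TT_mult[OF TT_mult[OF a TT_lin] TT_lin])
      then show ?thesis by simp
    qed
    then show ?thesis unfolding g_def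
      by (intro TT_sum ballI TT_sum) auto
  qed
  have g_ge: "g w s \<ge> c * (norm (snd (snd w)))^2" for w s
    using ellc[rule_format, of 0 "snd (snd w)" "(snd (fst w), 0)"] unfolding g_eq by simp
  define tau where "tau w s = snd w \<bullet> (1::real, 0::real^'m)" for w :: "(real \<times> (real^'m)) \<times> (real \<times> (real^'m))" and s :: real
  have Ttau: "TT n 1 tau" for n unfolding tau_def by (rule TT_lin)
  define Wt where "Wt w s = 1 + s^2 + g w s + (tau w s)^2" for w s
  define P where "P w s = s^2 + g w s - (tau w s)^2" for w s
  have sq: "TT n 2 (\<lambda>w s. h w s * h w s)" if "TT n 1 h" for n h
    using TT_mult[OF that that] by simp
  have TWt: "TT n 2 Wt" for n
  proof -
    have "TT n 2 (\<lambda>w s. 1 + s * s + g w s + tau w s * tau w s)"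
      by (intro TT_add TT_mono[OF TT_const[of n 1]] sq TT_svar Tg Ttau) auto
    then show ?thesis unfolding Wt_def by (simp add: power2_eq_square)
  qed
  have TP: "TT n 2 P" for n
  proof -
    have "TT n 2 (\<lambda>w s. s * s + g w s - tau w s * tau w s)"
      by (intro TT_add TT_diff sq TT_svar Tg Ttau)
    then show ?thesis unfolding P_def by (simp add: power2_eq_square)
  qed
  define c0 where "c0 = min 1 c"
  have c0: "c0 > 0" unfolding c0_def using c by simp
  have Wt_lb: "\<forall>w s. Wt w s \<ge> c0 * (rho w s)^2"
  proof (intro allI)
    fix w :: "(real \<times> (real^'m)) \<times> (real \<times> (real^'m))" and s :: real
    have n2: "(norm (snd w))^2 = (tau w s)^2 + (norm (snd (snd w)))^2"
      unfolding tau_def by (cases w) (auto simp: inner_Pair norm_Pair power2_norm_eq_inner)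
    have "c0 * (rho w s)^2 = c0 * 1 + c0 * s^2 + c0 * (tau w s)^2 + c0 * (norm (snd (snd w)))^2"
      unfolding rho_sq n2 by (simp add: algebra_simps)
    also have "\<dots> \<le> 1 + s^2 + (tau w s)^2 + g w s"
    proof -
      have "c0 \<le> 1" "c0 \<le> c" unfolding c0_def by auto
      then have "c0 * s^2 \<le> s^2" "c0 * (tau w s)^2 \<le> (tau w s)^2"
        "c0 * (norm (snd (snd w)))^2 \<le> c * (norm (snd (snd w)))^2"
        using mult_right_mono[of c0 1 "s^2"] mult_right_mono[of c0 1 "(tau w s)^2"]
          mult_right_mono[of c0 c "(norm (snd (snd w)))^2"] by auto
      then show ?thesis using g_ge[of w s] \<open>c0 \<le> 1\<close> by linarith
    qed
    finally show "Wt w s \<ge> c0 * (rho w s)^2" unfolding Wt_def by simp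
  qed
  have Wt_pos: "Wt w s > 0" for w s
    using Wt_lb c0 rho_pos[of w s] by (metis mult_pos_pos zero_less_power less_le_trans)
  have TiW: "TT n (-2) (\<lambda>w s. inverse (Wt w s))" for n
    by (rule TT_inverse[OF c0 Wt_lb TWt])
  define r where "r w s = P w s * inverse (Wt w s)" for w s
  have Tr: "TT n 0 r" for n
    using TT_mult[OF TP TiW] unfolding r_def by simp
  have rb: "\<forall>w s. \<bar>r w s\<bar> \<le> 1"
  proof (intro allI)
    fix w s
    have g0: "g w s \<ge> 0" using g_ge[of w s] c by (meson order_trans mult_nonneg_nonneg zero_le_power2 less_imp_le)
    have "\<bar>P w s\<bar> \<le> Wt w s" unfolding P_def Wt_def using g0 by (auto simp: abs_le_iff)
    then show "\<bar>r w s\<bar> \<le> 1" unfolding r_def using Wt_pos[of w s]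
      by (simp add: abs_mult divide_le_eq_1 field_simps)
  qed
  define F where "F w s = (\<theta> (r w s) / r w s) * inverse (Wt w s)" for w s
  have TF: "\<forall>n. TT n (-2) F"
  proof
    fix n
    have "TT n 0 (\<lambda>w s. \<theta> (r w s) / r w s)"
      by (rule TT_compose[OF Sm_Phi[OF \<theta>_smooth \<theta>_zero] Tr rb])
    from TT_mult[OF this TiW] show "TT n (-2) F" unfolding F_def by simp
  qed
  have sym: "symbol_class (-1) (\<lambda>z \<zeta>. LINT s|lborel. F (z, \<zeta>) s)"
    by (rule TT_symbol[OF TF])
  have "(\<lambda>(z :: real \<times> (real^'m)) (\<zeta> :: real \<times> (real^'m)). q_T \<alpha> \<theta> (snd z) (fst \<zeta>) (snd \<zeta>))
      = (\<lambda>z \<zeta>. LINT s|lborel. F (z, \<zeta>) s)"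
  proof (intro ext)
    fix z \<zeta> :: "real \<times> (real^'m)"
    show "q_T \<alpha> \<theta> (snd z) (fst \<zeta>) (snd \<zeta>) = (LINT s|lborel. F (z, \<zeta>) s)"
      unfolding q_T_def
    proof (rule Bochner_Integration.integral_cong[OF refl])
      fix s
      have W: "Wt (z, \<zeta>) s = 1 + s^2 + metric_sq \<alpha> (snd z, 0) (snd \<zeta>) + (fst \<zeta>)^2"
        unfolding Wt_def g_eq tau_def inner_tau by simp
      have Pe: "P (z, \<zeta>) s = p_bdry \<alpha> (snd z) (fst \<zeta>) (snd \<zeta>) s"
        unfolding P_def g_eq tau_def inner_tau p_bdry_def by simp
      have Wp: "Wt (z, \<zeta>) s > 0" by (rule Wt_pos)
      show "\<theta> (p_bdry \<alpha> (snd z) (fst \<zeta>) (snd \<zeta>) s / (1 + s^2 + metric_sq \<alpha> (snd z, 0) (snd \<zeta>) + (fst \<zeta>)^2)) / p_bdry \<alpha> (snd z) (fst \<zeta>) (snd \<zeta>) s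
          = F (z, \<zeta>) s"
        unfolding F_def r_def W[symmetric] Pe[symmetric]
        using Wp by (cases "P (z, \<zeta>) s = 0") (simp_all add: field_simps)
    qed
  qed
  then show ?thesis using sym by simp
qed

theorem mainTheorem6:
  fixes \<alpha> :: "'m::finite \<Rightarrow> 'm \<Rightarrow> ((real^'m) \<times> real) \<Rightarrow> real"
    and \<theta> :: "real \<Rightarrow> real"
  assumes sym: "\<forall>i j. \<alpha> i j = \<alpha> j i"
    and smooth: "\<forall>i j. smooth_fun (\<alpha> i j)"
    and bdd: "\<forall>i j. bounded_derivs (\<alpha> i j)"
    and ell: "\<exists>c>0. \<forall>x \<xi>' \<xi>n. \<xi>n^2 + metric_sq \<alpha> x \<xi>' \<ge> c * (\<xi>n^2 + (norm \<xi>')^2)"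
    and \<theta>_smooth: "smooth_fun \<theta>"
    and \<theta>_range: "\<forall>\<sigma>. 0 \<le> \<theta> \<sigma> \<and> \<theta> \<sigma> \<le> 1"
    and \<theta>_one: "\<forall>\<sigma>. \<sigma> \<ge> 1/5 \<longrightarrow> \<theta> \<sigma> = 1"
    and \<theta>_zero: "\<forall>\<sigma>. \<sigma> \<le> 1/10 \<longrightarrow> \<theta> \<sigma> = 0"
  shows "symbol_class (-1)
           (\<lambda>(z :: real \<times> (real^'m)) (\<zeta> :: real \<times> (real^'m)). q_T \<alpha> \<theta> (snd z) (fst \<zeta>) (snd \<zeta>))"
    using main_aux[OF smooth bdd ell \<theta>_smooth \<theta>_zero] .

end
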